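(* Let $\mathcal{H}_A\cong\mathbb{C}^{d_A}$, $\mathcal{H}_B\cong\mathbb{C}^{d_B}$ with $d_A,d_B\ge 2$ and computational bases $\{|a\rangle\}$, $\{|b\rangle\}$. There is no operator of the form $O=\sum_{\vec a\in\mathbb{Z}_{d_A}^3,\vec b\in\mathbb{Z}_{d_B}^3}O(\vec a,\vec b)\,|\vec a\rangle\langle\vec a|\otimes|\vec b\rangle\langle\vec b|$ (with complex coefficients $O(\vec a,\vec b)$) such that $(\Phi^3_A\otimes\Phi^3_B)(O)=M_{neg}$, where $M_{neg}=\tfrac12\big(W^A_{(1,2,3)}\otimes W^B_{(1,3,2)}+W^A_{(1,3,2)}\otimes W^B_{(1,2,3)}\big)$.
   Context: For $\mathcal{H}\cong\mathbb{C}^d$, $\Phi^3(X)=\int_{\mathrm{Haar}}dU\,U^{\otimes3}XU^{\dagger\otimes3}$ is the 3-fold Haar twirl on $\mathcal{H}^{\otimes3}$; $\Phi^3_A\otimes\Phi^3_B$ is independent twirling of the $A$ and $B$ parts of $(\mathcal{H}_A\otimes\mathcal{H}_B)^{\otimes3}\cong\mathcal{H}_A^{\otimes3}\otimes\mathcal{H}_B^{\otimes3}$. $W_\pi$ ($\pi\in S_3$) is the operator permuting tensor factors, $W_{(1,2,3)}|a_1,a_2,a_3\rangle=|a_2,a_3,a_1\rangle$ and $W_{(1,3,2)}=W_{(1,2,3)}^{-1}$; superscripts indicate the system. $|\vec a\rangle=|a_1\rangle|a_2\rangle|a_3\rangle$. *)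

theory Defs
  imports "HOL-Probability.Probability"
begin

text \<open>Matrices on C^d are represented as complex^'n^'n with CARD('n) = d
  (the computational basis is indexed by the finite type 'n).\<close>

definition adjoint_mat :: "complex^'n^'n \<Rightarrow> complex^'n^'n" where
  "adjoint_mat U = (\<chi> i j. cnj (U $ j $ i))"

definition unitary_mat :: "complex^'n^'n \<Rightarrow> bool" where
  "unitary_mat U \<longleftrightarrow> U ** adjoint_mat U = mat 1 \<and> adjoint_mat U ** U = mat 1"

text \<open>Haar measure on U(d): a Borel probability measure concentrated on the
  unitary group and invariant under left multiplication by unitaries
  (this characterizes the Haar measure uniquely).\<close>

definition haar_unitary :: "(complex^'n^'n) measure \<Rightarrow> bool" where
  "haar_unitary \<mu> \<longleftrightarrow>
     sets \<mu> = sets borel \<and> prob_space \<mu> \<and>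
     emeasure \<mu> {U. unitary_mat U} = 1 \<and>
     (\<forall>W. unitary_mat W \<longrightarrow> distr \<mu> borel (\<lambda>U. W ** U) = \<mu>)"

text \<open>Matrix entries of U^{\<otimes>3} in the product basis |a1 a2 a3>.\<close>

definition U3 :: "complex^'n^'n \<Rightarrow> ('n \<times> 'n \<times> 'n) \<Rightarrow> ('n \<times> 'n \<times> 'n) \<Rightarrow> complex" where
  "U3 U x y = (case x of (a1, a2, a3) \<Rightarrow> case y of (b1, b2, b3) \<Rightarrow>
                 U $ a1 $ b1 * U $ a2 $ b2 * U $ a3 $ b3)"

type_synonym ('a, 'b) idx3 = "('a \<times> 'a \<times> 'a) \<times> ('b \<times> 'b \<times> 'b)"

text \<open>Operators on (H_A \<otimes> H_B)^{\<otimes>3} \<cong> H_A^{\<otimes>3} \<otimes> H_B^{\<otimes>3}, as matrices indexed by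
  pairs (a-triple, b-triple).\<close>

definition twirl3_AB ::
  "(complex^'a^'a) measure \<Rightarrow> (complex^'b^'b) measure \<Rightarrow>
   (('a,'b) idx3 \<Rightarrow> ('a,'b) idx3 \<Rightarrow> complex) \<Rightarrow>
   (('a,'b) idx3 \<Rightarrow> ('a,'b) idx3 \<Rightarrow> complex)" where
  "twirl3_AB \<mu>A \<mu>B X = (\<lambda>x y.
     integral\<^sup>L (\<mu>A \<Otimes>\<^sub>M \<mu>B) (\<lambda>(U, V).
       \<Sum>p\<in>UNIV. \<Sum>q\<in>UNIV.
         (U3 U (fst x) (fst p) * U3 V (snd x) (snd p)) * X p q *
         cnj (U3 U (fst y) (fst q) * U3 V (snd y) (snd q))))"

definition W123 :: "('n \<times> 'n \<times> 'n) \<Rightarrow> ('n \<times> 'n \<times> 'n) \<Rightarrow> complex" where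
  "W123 x y = (case y of (a1, a2, a3) \<Rightarrow> if x = (a2, a3, a1) then 1 else 0)"

definition W132 :: "('n \<times> 'n \<times> 'n) \<Rightarrow> ('n \<times> 'n \<times> 'n) \<Rightarrow> complex" where
  "W132 x y = (case y of (a1, a2, a3) \<Rightarrow> if x = (a3, a1, a2) then 1 else 0)"

definition tensor_op ::
  "('a \<Rightarrow> 'a \<Rightarrow> complex) \<Rightarrow> ('b \<Rightarrow> 'b \<Rightarrow> complex) \<Rightarrow> ('a \<times> 'b \<Rightarrow> 'a \<times> 'b \<Rightarrow> complex)" where
  "tensor_op P Q x y = P (fst x) (fst y) * Q (snd x) (snd y)"

definition M_neg :: "('a,'b) idx3 \<Rightarrow> ('a,'b) idx3 \<Rightarrow> complex" where
  "M_neg x y = (1/2) * (tensor_op W123 W132 x y + tensor_op W132 W123 x y)"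

definition diag_op :: "('i \<Rightarrow> complex) \<Rightarrow> 'i \<Rightarrow> 'i \<Rightarrow> complex" where
  "diag_op f x y = (if x = y then f x else 0)"

end

theory Submission
  imports Defs
begin
lemma orth: assumes "unitary_mat U"
  shows "(\<Sum>a\<in>UNIV. U$a$r * cnj(U$a$q)) = (if r = q then 1 else 0)"
proof -
  have "(adjoint_mat U ** U) $ q $ r = mat 1 $ q $ r"
    using assms unfolding unitary_mat_def by simp
  also have "\<dots> = (if r = q then 1 else 0)" by (simp add: mat_def)
  finally have 1: "(adjoint_mat U ** U) $ q $ r = (if r = q then 1 else 0)" .
  have "(adjoint_mat U ** U) $ q $ r = (\<Sum>a\<in>UNIV. cnj(U$a$q) * U$a$r)"
    by (simp add: matrix_matrix_mult_def adjoint_mat_def)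
  then show ?thesis using 1 by (simp add: mult.commute)
qed
lemma sum2: "(\<Sum>x\<in>(UNIV::('a::finite\<times>'b::finite) set). f x) = (\<Sum>a\<in>UNIV. \<Sum>b\<in>UNIV. f (a,b))"
proof -
  have "(\<Sum>a\<in>UNIV. \<Sum>b\<in>UNIV. f (a,b)) = (\<Sum>x\<in>UNIV \<times> UNIV. f x)"
    by (subst sum.cartesian_product) (simp add: case_prod_beta')
  then show ?thesis by simp
qed
lemma sum3: "(\<Sum>x\<in>(UNIV::('a::finite\<times>'a\<times>'a) set). f x) = (\<Sum>a1\<in>UNIV. \<Sum>a2\<in>UNIV. \<Sum>a3\<in>UNIV. f (a1,a2,a3))"
  by (subst sum2, subst sum2, rule refl)
lemma fact3: "(\<Sum>a1\<in>UNIV. \<Sum>a2\<in>UNIV. \<Sum>a3\<in>UNIV. (f a1 * g a2 * h a3 :: complex)) = sum f UNIV * sum g UNIV * sum h UNIV"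
  by (simp only: sum_distrib_left[symmetric] sum_distrib_right[symmetric])
lemma W123_alt: "W123 x y = (if x = (fst (snd y), snd (snd y), fst y) then 1 else 0)"
  by (cases y) (simp add: W123_def)
lemma W132_alt: "W132 x y = (if x = (snd (snd y), fst y, fst (snd y)) then 1 else 0)"
  by (cases y) (simp add: W132_def)
lemma delta_sum: "(\<Sum>x\<in>(UNIV::'i::finite set). (if x = r then 1 else 0) * A x * (B::complex)) = A r * B"
proof -
  have "\<And>x. (if x = r then 1 else 0) * A x * B = (if x = r then A x * B else 0)" by simp
  then show ?thesis by (simp add: sum.delta')
qed
lemma WA123: assumes "unitary_mat U"
  shows "(\<Sum>x\<in>UNIV. \<Sum>y\<in>UNIV. W123 x y * U3 U x p * cnj (U3 U y q)) = W123 p q"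
proof -
  obtain p1 p2 p3 where p: "p = (p1,p2,p3)" by (cases p) auto
  obtain q1 q2 q3 where q: "q = (q1,q2,q3)" by (cases q) auto
  have "(\<Sum>x\<in>UNIV. \<Sum>y\<in>UNIV. W123 x y * U3 U x p * cnj (U3 U y q))
     = (\<Sum>y\<in>UNIV. \<Sum>x\<in>UNIV. W123 x y * U3 U x p * cnj (U3 U y q))" by (rule sum.swap)
  also have "\<dots> = (\<Sum>y\<in>UNIV. U3 U (fst (snd y), snd (snd y), fst y) p * cnj (U3 U y q))"
    unfolding W123_alt delta_sum by (rule refl)
  also have "\<dots> = (\<Sum>a1\<in>UNIV. \<Sum>a2\<in>UNIV. \<Sum>a3\<in>UNIV.
      (U$a1$p3 * cnj (U$a1$q1)) * (U$a2$p1 * cnj (U$a2$q2)) * (U$a3$p2 * cnj (U$a3$q3)))"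
    unfolding sum3 p q U3_def by (simp add: ac_simps)
  also have "\<dots> = W123 p q"
    unfolding fact3 orth[OF assms] by (auto simp: p q W123_def)
  finally show ?thesis .
qed
lemma WA132: assumes "unitary_mat U"
  shows "(\<Sum>x\<in>UNIV. \<Sum>y\<in>UNIV. W132 x y * U3 U x p * cnj (U3 U y q)) = W132 p q"
proof -
  obtain p1 p2 p3 where p: "p = (p1,p2,p3)" by (cases p) auto
  obtain q1 q2 q3 where q: "q = (q1,q2,q3)" by (cases q) auto
  have "(\<Sum>x\<in>UNIV. \<Sum>y\<in>UNIV. W132 x y * U3 U x p * cnj (U3 U y q))
     = (\<Sum>y\<in>UNIV. \<Sum>x\<in>UNIV. W132 x y * U3 U x p * cnj (U3 U y q))" by (rule sum.swap)
  also have "\<dots> = (\<Sum>y\<in>UNIV. U3 U (snd (snd y), fst y, fst (snd y)) p * cnj (U3 U y q))"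
    unfolding W132_alt delta_sum by (rule refl)
  also have "\<dots> = (\<Sum>a1\<in>UNIV. \<Sum>a2\<in>UNIV. \<Sum>a3\<in>UNIV.
      (U$a1$p2 * cnj (U$a1$q1)) * (U$a2$p3 * cnj (U$a2$q2)) * (U$a3$p1 * cnj (U$a3$q3)))"
    unfolding sum3 p q U3_def by (simp add: ac_simps)
  also have "\<dots> = W132 p q"
    unfolding fact3 orth[OF assms] by (auto simp: p q W132_def)
  finally show ?thesis .
qed

lemma swap3: "(\<Sum>y\<in>B. \<Sum>p\<in>C. \<Sum>q\<in>D. F y p q) = (\<Sum>p\<in>C. \<Sum>q\<in>D. \<Sum>y\<in>B. (F y p q :: complex))"
proof -
  have "(\<Sum>y\<in>B. \<Sum>p\<in>C. \<Sum>q\<in>D. F y p q) = (\<Sum>p\<in>C. \<Sum>y\<in>B. \<Sum>q\<in>D. F y p q)" by (rule sum.swap)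
  also have "\<dots> = (\<Sum>p\<in>C. \<Sum>q\<in>D. \<Sum>y\<in>B. F y p q)" by (rule sum.cong[OF refl], rule sum.swap)
  finally show ?thesis .
qed

lemma swap4: "(\<Sum>x\<in>A. \<Sum>y\<in>B. \<Sum>p\<in>C. \<Sum>q\<in>D. F x y p q) = (\<Sum>p\<in>C. \<Sum>q\<in>D. \<Sum>x\<in>A. \<Sum>y\<in>B. (F x y p q :: complex))"
proof -
  have "(\<Sum>x\<in>A. \<Sum>y\<in>B. \<Sum>p\<in>C. \<Sum>q\<in>D. F x y p q) = (\<Sum>x\<in>A. \<Sum>p\<in>C. \<Sum>q\<in>D. \<Sum>y\<in>B. F x y p q)"
    by (rule sum.cong[OF refl], rule swap3)
  also have "\<dots> = (\<Sum>p\<in>C. \<Sum>q\<in>D. \<Sum>x\<in>A. \<Sum>y\<in>B. F x y p q)" by (rule swap3)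
  finally show ?thesis .
qed

lemma fact22: "(\<Sum>xa\<in>A. \<Sum>xb\<in>B. \<Sum>ya\<in>C. \<Sum>yb\<in>D. F xa ya * (G xb yb :: complex))
   = (\<Sum>xa\<in>A. \<Sum>ya\<in>C. F xa ya) * (\<Sum>xb\<in>B. \<Sum>yb\<in>D. G xb yb)"
proof -
  have "(\<Sum>xa\<in>A. \<Sum>xb\<in>B. \<Sum>ya\<in>C. \<Sum>yb\<in>D. F xa ya * G xb yb)
      = (\<Sum>xa\<in>A. \<Sum>ya\<in>C. \<Sum>xb\<in>B. \<Sum>yb\<in>D. F xa ya * G xb yb)"
    by (rule sum.cong[OF refl], rule sum.swap)
  also have "\<dots> = (\<Sum>xa\<in>A. \<Sum>ya\<in>C. F xa ya * (\<Sum>xb\<in>B. \<Sum>yb\<in>D. G xb yb))"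
    by (simp only: sum_distrib_left)
  also have "\<dots> = (\<Sum>xa\<in>A. \<Sum>ya\<in>C. F xa ya) * (\<Sum>xb\<in>B. \<Sum>yb\<in>D. G xb yb)"
    by (simp only: sum_distrib_right)
  finally show ?thesis .
qed

lemma pointwise:
  fixes P :: "('a::finite\<times>'a\<times>'a) \<Rightarrow> ('a\<times>'a\<times>'a) \<Rightarrow> complex"
    and Q :: "('b::finite\<times>'b\<times>'b) \<Rightarrow> ('b\<times>'b\<times>'b) \<Rightarrow> complex"
  assumes hP: "\<And>p q. (\<Sum>x\<in>UNIV. \<Sum>y\<in>UNIV. P x y * U3 U x p * cnj (U3 U y q)) = P p q"
    and hQ: "\<And>p q. (\<Sum>x\<in>UNIV. \<Sum>y\<in>UNIV. Q x y * U3 V x p * cnj (U3 V y q)) = Q p q"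
  shows "(\<Sum>x\<in>UNIV. \<Sum>y\<in>UNIV. tensor_op P Q x y *
      (\<Sum>p\<in>UNIV. \<Sum>q\<in>UNIV. (U3 U (fst x) (fst p) * U3 V (snd x) (snd p)) * X p q *
         cnj (U3 U (fst y) (fst q) * U3 V (snd y) (snd q))))
    = (\<Sum>p\<in>UNIV. \<Sum>q\<in>UNIV. tensor_op P Q p q * X p q)"
proof -
  define G where "G x p = U3 U (fst x) (fst p) * U3 V (snd x) (snd p)" for x p
  have K: "(\<Sum>x\<in>UNIV. \<Sum>y\<in>UNIV. tensor_op P Q x y * G x p * cnj (G y q)) = tensor_op P Q p q" for p q
  proof -
    have "(\<Sum>x\<in>UNIV. \<Sum>y\<in>UNIV. tensor_op P Q x y * G x p * cnj (G y q))
      = (\<Sum>xa\<in>UNIV. \<Sum>xb\<in>UNIV. \<Sum>ya\<in>UNIV. \<Sum>yb\<in>UNIV.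
          (P xa ya * U3 U xa (fst p) * cnj (U3 U ya (fst q))) * (Q xb yb * U3 V xb (snd p) * cnj (U3 V yb (snd q))))"
      unfolding sum2[of "\<lambda>x. \<Sum>y\<in>UNIV. _ x y"] sum2[of "\<lambda>y. _ y"]
      by (simp add: G_def tensor_op_def ac_simps)
    also have "\<dots> = P (fst p) (fst q) * Q (snd p) (snd q)"
      unfolding fact22 hP hQ by (rule refl)
    finally show ?thesis by (simp add: tensor_op_def)
  qed
  have "(\<Sum>x\<in>UNIV. \<Sum>y\<in>UNIV. tensor_op P Q x y *
      (\<Sum>p\<in>UNIV. \<Sum>q\<in>UNIV. G x p * X p q * cnj (G y q)))
    = (\<Sum>x\<in>UNIV. \<Sum>y\<in>UNIV. \<Sum>p\<in>UNIV. \<Sum>q\<in>UNIV. tensor_op P Q x y * (G x p * X p q * cnj (G y q)))"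
    by (simp only: sum_distrib_left)
  also have "\<dots> = (\<Sum>p\<in>UNIV. \<Sum>q\<in>UNIV. \<Sum>x\<in>UNIV. \<Sum>y\<in>UNIV. tensor_op P Q x y * (G x p * X p q * cnj (G y q)))"
    by (rule swap4)
  also have "\<dots> = (\<Sum>p\<in>UNIV. \<Sum>q\<in>UNIV. X p q * (\<Sum>x\<in>UNIV. \<Sum>y\<in>UNIV. tensor_op P Q x y * G x p * cnj (G y q)))"
    by (simp add: sum_distrib_left ac_simps)
  also have "\<dots> = (\<Sum>p\<in>UNIV. \<Sum>q\<in>UNIV. tensor_op P Q p q * X p q)"
    unfolding K by (simp add: ac_simps)
  finally show ?thesis unfolding G_def .
qed

lemma U3_alt: "U3 U x p = U$fst x$fst p * U$fst (snd x)$fst (snd p) * U$snd (snd x)$snd (snd p)"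
  by (cases x; cases p) (simp add: U3_def)

lemma entry_le1: assumes "unitary_mat U" shows "norm (U$i$j) \<le> 1"
proof -
  have "(\<Sum>a\<in>UNIV. U$a$j * cnj(U$a$j)) = 1" using orth[OF assms, of j j] by simp
  have e: "\<And>a. U$a$j * cnj(U$a$j) = complex_of_real ((norm (U$a$j))\<^sup>2)"
    by (simp only: complex_norm_square)
  have "complex_of_real (\<Sum>a\<in>UNIV. (norm (U$a$j))\<^sup>2) = (\<Sum>a\<in>UNIV. U$a$j * cnj(U$a$j))"
    by (simp only: of_real_sum e)
  also have "\<dots> = 1" by fact
  finally have "complex_of_real (\<Sum>a\<in>UNIV. (norm (U$a$j))\<^sup>2) = 1" .
  then have s: "(\<Sum>a\<in>UNIV. (norm (U$a$j))\<^sup>2) = 1" using of_real_eq_1_iff by blast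
  have "(norm (U$i$j))\<^sup>2 \<le> (\<Sum>a\<in>UNIV. (norm (U$a$j))\<^sup>2)"
    by (rule member_le_sum) auto
  then have "(norm (U$i$j))\<^sup>2 \<le> 1" using s by simp
  then show ?thesis by (simp add: power_le_one_iff abs_square_le_1)
qed

lemma U3_le1: assumes "unitary_mat U" shows "norm (U3 U x p) \<le> 1"
  unfolding U3_alt norm_mult
  by (intro mult_le_one entry_le1[OF assms] mult_nonneg_nonneg norm_ge_zero)

lemma integrand_bound:
  assumes "unitary_mat U" "unitary_mat V"
  shows "norm (\<Sum>p\<in>UNIV. \<Sum>q\<in>UNIV. (U3 U (fst x) (fst p) * U3 V (snd x) (snd p)) * X p q *
         cnj (U3 U (fst y) (fst q) * U3 V (snd y) (snd q))) \<le> (\<Sum>p\<in>UNIV. \<Sum>q\<in>UNIV. norm (X p q))"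
proof -
  have t: "norm ((U3 U (fst x) (fst p) * U3 V (snd x) (snd p)) * X p q *
         cnj (U3 U (fst y) (fst q) * U3 V (snd y) (snd q))) \<le> norm (X p q)" for p q
  proof -
    have a: "norm (U3 U (fst x) (fst p) * U3 V (snd x) (snd p)) \<le> 1"
      unfolding norm_mult by (intro mult_le_one U3_le1 assms norm_ge_zero)
    have b: "norm (cnj (U3 U (fst y) (fst q) * U3 V (snd y) (snd q))) \<le> 1"
      unfolding complex_mod_cnj norm_mult by (intro mult_le_one U3_le1 assms norm_ge_zero)
    have "norm ((U3 U (fst x) (fst p) * U3 V (snd x) (snd p)) * X p q *
         cnj (U3 U (fst y) (fst q) * U3 V (snd y) (snd q))) = 
         norm (U3 U (fst x) (fst p) * U3 V (snd x) (snd p)) * norm (X p q) *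
         norm (cnj (U3 U (fst y) (fst q) * U3 V (snd y) (snd q)))" by (simp only: norm_mult)
    also have "\<dots> \<le> 1 * norm (X p q) * 1"
      by (intro mult_mono a b order_refl norm_ge_zero mult_nonneg_nonneg) simp_all
    finally show ?thesis by simp
  qed
  show ?thesis
    by (rule order_trans[OF norm_sum sum_mono], rule order_trans[OF norm_sum sum_mono], rule t)
qed

lemma integrand_cont:
  "continuous_on UNIV (\<lambda>(U::complex^'a::finite^'a, V::complex^'b::finite^'b).
     \<Sum>p\<in>UNIV. \<Sum>q\<in>UNIV. (U3 U (fst x) (fst p) * U3 V (snd x) (snd p)) * X p q *
         cnj (U3 U (fst y) (fst q) * U3 V (snd y) (snd q)))"
  unfolding case_prod_beta' U3_alt
  by (intro continuous_intros)

lemma ind_mult: "(if P then 1 else 0) * (if Q then 1 else 0) = (if P \<and> Q then (1::complex) else 0)"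
  by simp
lemma ind_sum: "(\<Sum>x\<in>(UNIV::'i::finite set). if x = r \<and> x = s then (1::complex) else 0) = (if r = s then 1 else 0)"
proof (cases "r = s")
  case True then show ?thesis by (simp add: sum.delta)
next
  case False
  then have "\<And>x. (if x = r \<and> x = s then (1::complex) else 0) = 0" by auto
  then show ?thesis using False by simp
qed
lemma diag3: "(\<Sum>a2\<in>(UNIV::'i::finite set). \<Sum>a3\<in>UNIV. if a1 = a2 \<and> a2 = a3 then (1::complex) else 0) = 1"
proof -
  have "\<And>a2. (\<Sum>a3\<in>(UNIV::'i set). if a1 = a2 \<and> a2 = a3 then (1::complex) else 0) = (if a1 = a2 then 1 else 0)"
  proof -
    fix a2
    show "(\<Sum>a3\<in>(UNIV::'i set). if a1 = a2 \<and> a2 = a3 then (1::complex) else 0) = (if a1 = a2 then 1 else 0)"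
      by (cases "a1 = a2") (simp_all add: sum.delta)
  qed
  then show ?thesis by (simp add: sum.delta)
qed
lemma cntA: "(\<Sum>x\<in>(UNIV::('a::finite\<times>'a\<times>'a) set). \<Sum>y\<in>UNIV. W123 x y * W123 x y) = of_nat (CARD('a)^3)"
proof -
  have "(\<Sum>x\<in>(UNIV::('a\<times>'a\<times>'a) set). \<Sum>y\<in>UNIV. W123 x y * W123 x y)
     = (\<Sum>y\<in>(UNIV::('a\<times>'a\<times>'a) set). \<Sum>x\<in>UNIV. W123 x y * W123 x y)" by (rule sum.swap)
  also have "\<dots> = (\<Sum>y\<in>(UNIV::('a\<times>'a\<times>'a) set). 1)"
    unfolding W123_alt ind_mult ind_sum by simp
  also have "\<dots> = of_nat (CARD('a)^3)"
    by (simp add: card_cartesian_product power3_eq_cube flip: UNIV_Times_UNIV)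
  finally show ?thesis .
qed

lemma cntB: "(\<Sum>x\<in>(UNIV::('a::finite\<times>'a\<times>'a) set). \<Sum>y\<in>UNIV. W132 x y * W132 x y) = of_nat (CARD('a)^3)"
proof -
  have "(\<Sum>x\<in>(UNIV::('a\<times>'a\<times>'a) set). \<Sum>y\<in>UNIV. W132 x y * W132 x y)
     = (\<Sum>y\<in>(UNIV::('a\<times>'a\<times>'a) set). \<Sum>x\<in>UNIV. W132 x y * W132 x y)" by (rule sum.swap)
  also have "\<dots> = (\<Sum>y\<in>(UNIV::('a\<times>'a\<times>'a) set). 1)"
    unfolding W132_alt ind_mult ind_sum by simp
  also have "\<dots> = of_nat (CARD('a)^3)"
    by (simp add: card_cartesian_product power3_eq_cube flip: UNIV_Times_UNIV)
  finally show ?thesis .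
qed

lemma cntC: "(\<Sum>x\<in>(UNIV::('a::finite\<times>'a\<times>'a) set). \<Sum>y\<in>UNIV. W123 x y * W132 x y) = of_nat CARD('a)"
proof -
  have "(\<Sum>x\<in>(UNIV::('a\<times>'a\<times>'a) set). \<Sum>y\<in>UNIV. W123 x y * W132 x y)
     = (\<Sum>y\<in>(UNIV::('a\<times>'a\<times>'a) set). \<Sum>x\<in>UNIV. W123 x y * W132 x y)" by (rule sum.swap)
  also have "\<dots> = (\<Sum>y\<in>(UNIV::('a\<times>'a\<times>'a) set). if fst y = fst (snd y) \<and> fst (snd y) = snd (snd y) then 1 else 0)"
  proof (rule sum.cong[OF refl])
    fix y :: "'a\<times>'a\<times>'a"
    obtain a1 a2 a3 where y: "y = (a1,a2,a3)" by (cases y) auto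
    have "((a2, a3, a1) = (a3, a1, a2)) = (a1 = a2 \<and> a2 = a3)" by auto
    then show "(\<Sum>x\<in>UNIV. W123 x y * W132 x y) = (if fst y = fst (snd y) \<and> fst (snd y) = snd (snd y) then 1 else 0)"
      unfolding W123_alt W132_alt ind_mult ind_sum y by simp
  qed
  also have "\<dots> = (\<Sum>a1\<in>(UNIV::'a set). 1)"
    unfolding sum3 by (simp only: fst_conv snd_conv diag3)
  also have "\<dots> = of_nat CARD('a)" by simp
  finally show ?thesis .
qed

lemma cntD: "(\<Sum>x\<in>(UNIV::('a::finite\<times>'a\<times>'a) set). \<Sum>y\<in>UNIV. W132 x y * W123 x y) = of_nat CARD('a)"
  using cntC by (simp add: mult.commute)

lemma W_diag: "W132 b b = W123 b b"
proof -
  obtain b1 b2 b3 where b: "b = (b1,b2,b3)" by (cases b) auto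
  have e: "((b1,b2,b3) = (b3,b1,b2)) = ((b1,b2,b3) = (b2,b3,b1))" by (simp only: prod.inject) blast
  show ?thesis unfolding W123_alt W132_alt b fst_conv snd_conv e by (rule refl)
qed

lemma ip_diag: "(\<Sum>x\<in>UNIV. \<Sum>y\<in>UNIV. Y x y * diag_op c x y) = (\<Sum>x\<in>(UNIV::'i::finite set). Y x x * c x)"
proof -
  have "\<And>x y. Y x y * diag_op c x y = (if x = y then Y x x * c x else 0)" by (simp add: diag_op_def)
  then show ?thesis by (simp add: sum.delta)
qed

lemma ip_half: "(\<Sum>x\<in>UNIV. \<Sum>y\<in>UNIV. Y x y * ((1/2) * (A x y + B x y)))
   = (1/2) * ((\<Sum>x\<in>(UNIV::'i::finite set). \<Sum>y\<in>UNIV. Y x y * A x y) + (\<Sum>x\<in>UNIV. \<Sum>y\<in>UNIV. Y x y * (B x y :: complex)))"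
proof -
  have "\<And>x y. Y x y * ((1/2) * (A x y + B x y)) = (1/2) * (Y x y * A x y) + (1/2) * (Y x y * B x y)"
    by (simp add: algebra_simps)
  then show ?thesis by (simp only: sum.distrib sum_distrib_left[symmetric] distrib_left)
qed

lemma ip_tensor:
  fixes P P' :: "'a::finite \<Rightarrow> 'a \<Rightarrow> complex" and Q Q' :: "'b::finite \<Rightarrow> 'b \<Rightarrow> complex"
  shows "(\<Sum>x\<in>UNIV. \<Sum>y\<in>UNIV. tensor_op P Q x y * tensor_op P' Q' x y)
   = (\<Sum>xa\<in>UNIV. \<Sum>ya\<in>UNIV. P xa ya * P' xa ya) * (\<Sum>xb\<in>UNIV. \<Sum>yb\<in>UNIV. Q xb yb * Q' xb yb)"
proof -
  have "(\<Sum>x\<in>UNIV. \<Sum>y\<in>UNIV. tensor_op P Q x y * tensor_op P' Q' x y)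
     = (\<Sum>xa\<in>UNIV. \<Sum>xb\<in>UNIV. \<Sum>ya\<in>UNIV. \<Sum>yb\<in>UNIV. (P xa ya * P' xa ya) * (Q xb yb * Q' xb yb))"
    unfolding sum2[of "\<lambda>x. \<Sum>y\<in>UNIV. _ x y"] sum2[of "\<lambda>y. _ y"]
    by (simp add: tensor_op_def ac_simps)
  then show ?thesis unfolding fact22 .
qed

lemma nat_ineq: assumes "(A::nat) \<ge> 2" "(B::nat) \<ge> 2"
  shows "A^3*B^3 + A*B \<noteq> A^3*B + A*B^3"
proof
  assume h: "A^3*B^3 + A*B = A^3*B + A*B^3"
  define a where "a = int A"
  define b where "b = int B"
  have a2: "a \<ge> 2" and b2: "b \<ge> 2" using assms by (auto simp: a_def b_def)
  have "a^3*b^3 + a*b = a^3*b + a*b^3" using h unfolding a_def b_def by (metis of_nat_add of_nat_mult of_nat_power)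
  then have z: "(a^3 - a) * (b^3 - b) = 0" by (simp add: algebra_simps)
  have h1: "a * a \<ge> 2 * a" using a2 by (intro mult_right_mono) auto
  have h2: "(a*a)*a \<ge> (a*a)*2" using a2 by (intro mult_left_mono) auto
  have h3: "a^3 = a*a*a" by (simp add: power3_eq_cube)
  have pa: "a^3 - a > 0" using h1 h2 h3 a2 by linarith
  have h1: "b * b \<ge> 2 * b" using b2 by (intro mult_right_mono) auto
  have h2: "(b*b)*b \<ge> (b*b)*2" using b2 by (intro mult_left_mono) auto
  have h3: "b^3 = b*b*b" by (simp add: power3_eq_cube)
  have pb: "b^3 - b > 0" using h1 h2 h3 b2 by linarith
  from z pa pb show False by simp
qed

theorem proposition2:
  fixes \<mu>A :: "(complex^'a::finite^'a) measure"
    and \<mu>B :: "(complex^'b::finite^'b) measure"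
  assumes "CARD('a) \<ge> 2" and "CARD('b) \<ge> 2"
    and "haar_unitary \<mu>A" and "haar_unitary \<mu>B"
  shows "\<not> (\<exists>c :: ('a,'b) idx3 \<Rightarrow> complex.
             twirl3_AB \<mu>A \<mu>B (diag_op c) = (M_neg :: ('a,'b) idx3 \<Rightarrow> ('a,'b) idx3 \<Rightarrow> complex))"
proof
  assume "\<exists>c :: ('a,'b) idx3 \<Rightarrow> complex. twirl3_AB \<mu>A \<mu>B (diag_op c) = (M_neg :: ('a,'b) idx3 \<Rightarrow> ('a,'b) idx3 \<Rightarrow> complex)"
  then obtain c :: "('a,'b) idx3 \<Rightarrow> complex" where hc: "twirl3_AB \<mu>A \<mu>B (diag_op c) = M_neg" by blast
  from assms(3) have sA: "sets \<mu>A = sets borel" and pA: "prob_space \<mu>A"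
    and eA: "emeasure \<mu>A {U. unitary_mat U} = 1" unfolding haar_unitary_def by auto
  from assms(4) have sB: "sets \<mu>B = sets borel" and pB: "prob_space \<mu>B"
    and eB: "emeasure \<mu>B {U. unitary_mat U} = 1" unfolding haar_unitary_def by auto
  define M where "M = \<mu>A \<Otimes>\<^sub>M \<mu>B"
  have pM: "prob_space M" unfolding M_def using pA pB by (rule prob_space_pair)
  have fM: "finite_measure M" using pM by (rule prob_space.axioms(1))
  have UA: "{U. unitary_mat U} \<in> sets \<mu>A" using eA emeasure_notin_sets by force
  have UB: "{U. unitary_mat U} \<in> sets \<mu>B" using eB emeasure_notin_sets by force
  have eM: "emeasure M ({U. unitary_mat U} \<times> {V. unitary_mat V}) = 1"
    using sigma_finite_measure.emeasure_pair_measure_Times[OF prob_space_imp_sigma_finite[OF pB] UA UB] eA eB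
    by (simp add: M_def)
  have AEM: "AE z in M. unitary_mat (fst z) \<and> unitary_mat (snd z)"
  proof -
    have "measure M ({U. unitary_mat U} \<times> {V. unitary_mat V}) = 1" using eM by (simp add: measure_def)
    then have "AE z in M. z \<in> {U. unitary_mat U} \<times> {V. unitary_mat V}"
      by (rule prob_space.AE_prob_1[OF pM])
    then show ?thesis by (rule eventually_mono) auto
  qed
  define F where "F X x y = (\<lambda>(U::complex^'a^'a, V::complex^'b^'b).
       \<Sum>p\<in>UNIV. \<Sum>q\<in>UNIV. (U3 U (fst x) (fst p) * U3 V (snd x) (snd p)) * X p q *
         cnj (U3 U (fst y) (fst q) * U3 V (snd y) (snd q)))"
    for X :: "('a,'b) idx3 \<Rightarrow> ('a,'b) idx3 \<Rightarrow> complex" and x y :: "('a,'b) idx3"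
  have tw: "twirl3_AB \<mu>A \<mu>B X x y = integral\<^sup>L M (F X x y)" for X x y
    by (simp add: twirl3_AB_def F_def M_def)
  have bm: "borel_measurable M = borel_measurable (borel :: ((complex^'a^'a) \<times> (complex^'b^'b)) measure)"
  proof -
    have "sets M = sets (borel \<Otimes>\<^sub>M borel :: ((complex^'a^'a) \<times> (complex^'b^'b)) measure)"
      unfolding M_def by (rule sets_pair_measure_cong[OF sA sB])
    also have "\<dots> = sets borel" by (subst borel_prod) (rule refl)
    finally show ?thesis by (rule measurable_cong_sets) simp
  qed
  have meas: "F X x y \<in> borel_measurable M" for X x y
    unfolding bm F_def by (rule borel_measurable_continuous_onI[OF integrand_cont])
  have intg: "integrable M (F X x y)" for X x y
  proof (rule finite_measure.integrable_const_bound[OF fM, where B="\<Sum>p\<in>UNIV. \<Sum>q\<in>UNIV. norm (X p q)"])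
    show "AE z in M. norm (F X x y z) \<le> (\<Sum>p\<in>UNIV. \<Sum>q\<in>UNIV. norm (X p q))"
      using AEM
    proof (rule eventually_mono)
      fix z :: "(complex^'a^'a) \<times> (complex^'b^'b)"
      assume "unitary_mat (fst z) \<and> unitary_mat (snd z)"
      then show "norm (F X x y z) \<le> (\<Sum>p\<in>UNIV. \<Sum>q\<in>UNIV. norm (X p q))"
        unfolding F_def case_prod_beta' by (intro integrand_bound) auto
    qed
  qed (rule meas)
  have key: "(\<Sum>x\<in>UNIV. \<Sum>y\<in>UNIV. tensor_op P Q x y * twirl3_AB \<mu>A \<mu>B X x y)
      = (\<Sum>x\<in>UNIV. \<Sum>y\<in>UNIV. tensor_op P Q x y * X x y)"
    if hP: "\<And>(U::complex^'a^'a) p q. unitary_mat U \<Longrightarrow> (\<Sum>x\<in>UNIV. \<Sum>y\<in>UNIV. P x y * U3 U x p * cnj (U3 U y q)) = P p q"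
    and hQ: "\<And>(V::complex^'b^'b) p q. unitary_mat V \<Longrightarrow> (\<Sum>x\<in>UNIV. \<Sum>y\<in>UNIV. Q x y * U3 V x p * cnj (U3 V y q)) = Q p q"
    for P Q X
  proof -
    have "(\<Sum>x\<in>UNIV. \<Sum>y\<in>UNIV. tensor_op P Q x y * twirl3_AB \<mu>A \<mu>B X x y)
        = (\<Sum>x\<in>UNIV. \<Sum>y\<in>UNIV. integral\<^sup>L M (\<lambda>z. tensor_op P Q x y * F X x y z))"
      by (simp add: tw)
    also have "\<dots> = (\<Sum>x\<in>UNIV. integral\<^sup>L M (\<lambda>z. \<Sum>y\<in>UNIV. tensor_op P Q x y * F X x y z))"
      by (simp add: intg)
    also have "\<dots> = integral\<^sup>L M (\<lambda>z. \<Sum>x\<in>UNIV. \<Sum>y\<in>UNIV. tensor_op P Q x y * F X x y z)"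
      by (simp add: intg)
    also have "\<dots> = integral\<^sup>L M (\<lambda>z. \<Sum>x\<in>UNIV. \<Sum>y\<in>UNIV. tensor_op P Q x y * X x y)"
    proof (rule integral_cong_AE)
      show "(\<lambda>z. \<Sum>x\<in>UNIV. \<Sum>y\<in>UNIV. tensor_op P Q x y * F X x y z) \<in> borel_measurable M"
        by (intro borel_measurable_sum borel_measurable_times borel_measurable_const meas)
      show "(\<lambda>z. \<Sum>x\<in>UNIV. \<Sum>y\<in>UNIV. tensor_op P Q x y * X x y) \<in> borel_measurable M"
        by (rule borel_measurable_const)
      show "AE z in M. (\<Sum>x\<in>UNIV. \<Sum>y\<in>UNIV. tensor_op P Q x y * F X x y z) = (\<Sum>x\<in>UNIV. \<Sum>y\<in>UNIV. tensor_op P Q x y * X x y)"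
        using AEM
      proof (rule eventually_mono)
        fix z :: "(complex^'a^'a) \<times> (complex^'b^'b)"
        assume u: "unitary_mat (fst z) \<and> unitary_mat (snd z)"
        show "(\<Sum>x\<in>UNIV. \<Sum>y\<in>UNIV. tensor_op P Q x y * F X x y z) = (\<Sum>x\<in>UNIV. \<Sum>y\<in>UNIV. tensor_op P Q x y * X x y)"
          unfolding F_def case_prod_beta'
          by (rule pointwise) (use u hP hQ in auto)
      qed
    qed
    also have "\<dots> = (\<Sum>x\<in>UNIV. \<Sum>y\<in>UNIV. tensor_op P Q x y * X x y)"
      using pM by (simp add: prob_space.prob_space)
    finally show ?thesis .
  qed
  let ?Y1 = "tensor_op W123 W132 :: ('a,'b) idx3 \<Rightarrow> ('a,'b) idx3 \<Rightarrow> complex"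
  let ?Y2 = "tensor_op W123 W123 :: ('a,'b) idx3 \<Rightarrow> ('a,'b) idx3 \<Rightarrow> complex"
  have k1: "(\<Sum>x\<in>UNIV. \<Sum>y\<in>UNIV. ?Y1 x y * M_neg x y) = (\<Sum>x\<in>UNIV. \<Sum>y\<in>UNIV. ?Y1 x y * diag_op c x y)"
    unfolding hc[symmetric] by (rule key) (simp_all add: WA123 WA132)
  have k2: "(\<Sum>x\<in>UNIV. \<Sum>y\<in>UNIV. ?Y2 x y * M_neg x y) = (\<Sum>x\<in>UNIV. \<Sum>y\<in>UNIV. ?Y2 x y * diag_op c x y)"
    unfolding hc[symmetric] by (rule key) (simp_all add: WA123 WA132)
  have d: "(\<Sum>x\<in>UNIV. \<Sum>y\<in>UNIV. ?Y1 x y * diag_op c x y) = (\<Sum>x\<in>UNIV. \<Sum>y\<in>UNIV. ?Y2 x y * diag_op c x y)"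
    unfolding ip_diag by (simp add: tensor_op_def W_diag)
  define A where "A = CARD('a)"
  define B where "B = CARD('b)"
  have v1: "(\<Sum>x\<in>UNIV. \<Sum>y\<in>UNIV. ?Y1 x y * M_neg x y)
     = (1/2) * (of_nat (A^3) * of_nat (B^3) + of_nat A * of_nat B)"
    unfolding M_neg_def ip_half ip_tensor cntA cntB cntC cntD A_def B_def by (rule refl)
  have v2: "(\<Sum>x\<in>UNIV. \<Sum>y\<in>UNIV. ?Y2 x y * M_neg x y)
     = (1/2) * (of_nat (A^3) * of_nat B + of_nat A * of_nat (B^3))"
    unfolding M_neg_def ip_half ip_tensor cntA cntB cntC cntD A_def B_def by (rule refl)
  have "(1/2) * (of_nat (A^3) * of_nat (B^3) + of_nat A * of_nat B)
      = ((1/2) * (of_nat (A^3) * of_nat B + of_nat A * of_nat (B^3)) :: complex)"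
    using k1 k2 d v1 v2 by simp
  then have "of_nat (A^3) * of_nat (B^3) + of_nat A * of_nat B
      = (of_nat (A^3) * of_nat B + of_nat A * of_nat (B^3) :: complex)"
    by (rule mult_left_cancel[THEN iffD1, rotated]) simp
  then have "(of_nat (A^3*B^3 + A*B) :: complex) = of_nat (A^3*B + A*B^3)"
    by (simp only: of_nat_add of_nat_mult)
  then have "A^3*B^3 + A*B = A^3*B + A*B^3" using of_nat_eq_iff by blast
  moreover have "A^3*B^3 + A*B \<noteq> A^3*B + A*B^3"
    using assms(1,2) unfolding A_def B_def by (rule nat_ineq)
  ultimately show False by simp
qed
end
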